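(* For each point $p$ of $\mathcal{W}(3,2)$, consider the type-$p$ $X$-states, i.e. the two-qubit density matrices $\rho=\tfrac14\big(I\otimes I+\sum_{q\in H_p}c_q\,q\big)$ with real coefficients $c_q$. The $9$ types $p$ of Group 2 (those for which some valid type-$p$ state is entangled) are exactly the $9$ points $p$ whose perp-set $H_p$ intersects $\mathcal{Q}_0$ tangentially. The $6$ types of Group 1 (those for which every valid type-$p$ state is separable) are exactly the $6$ points $p$ whose perp-set $H_p$ intersects $\mathcal{Q}_0$ transversally.
   Context: The symplectic polar space $\mathcal{W}(3,2)$ is realized as follows. Its $15$ points are the $15$ nontrivial two-qubit Pauli operators $A\otimes B$ with $A,B\in\{I,X,Y,Z\}$, not both $I$, taken up to phase. Its $15$ lines are the triples $\{P,Q,PQ\}$ (up to phase) of pairwise commuting such operators. For a point $p$, its perp-set is $H_p=\{q: q \text{ commutes with } p\}$. It contains $p$ and has $7$ points: the union of the three lines through $p$. $\mathcal{Q}_0$ is the set of the $9$ points $A\otimes B$ with $A,B\in\{X,Y,Z\}$. Together with the $6$ lines of $\mathcal{W}(3,2)$ contained in it, $\mathcal{Q}_0$ forms a $3\times3$ grid; it is the hyperbolic quadric $x_1x_2+x_3x_4+x_1+x_2+x_3+x_4=0$ in the coordinates where $(Z^{\mu_1}X^{\nu_1})\otimes(Z^{\mu_2}X^{\nu_2})\mapsto[\mu_1:\nu_1:\mu_2:\nu_2]$. A geometric hyperplane of a point-line geometry is a set of points such that every line either lies in it or meets it in exactly one point. The geometric hyperplanes of the grid $\mathcal{Q}_0$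 are of two kinds: - perp-sets of the grid: a point together with the two grid lines through it ($5$ points); - ovoids: $3$ points, no two on a common grid line. $H_p$ intersects $\mathcal{Q}_0$ tangentially if $H_p\cap\mathcal{Q}_0$ is a perp-set of the grid, and transversally if $H_p\cap\mathcal{Q}_0$ is an ovoid of the grid. A density matrix is valid if positive semidefinite, and separable/entangled according to whether its partial transpose is positive semidefinite or not. *)

theory Defs
  imports Complex_Main
begin

text \<open>Single-qubit Pauli matrices, labelled 0 = I, 1 = X, 2 = Y, 3 = Z,
  as functions on indices 0,1 (value 0 outside).\<close>
definition pauli1 :: "nat \<Rightarrow> nat \<Rightarrow> nat \<Rightarrow> complex" where
  "pauli1 a i j =
     (if i < 2 \<and> j < 2 then
        (if a = 0 then (if i = j then 1 else 0)
         else if a = 1 then (if i = j then 0 else 1)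
         else if a = 2 then (if i = j then 0 else if i = 0 then - \<i> else \<i>)
         else if a = 3 then (if i = j then (if i = 0 then 1 else -1) else 0)
         else 0)
      else 0)"

type_synonym pt = "nat \<times> nat"

text \<open>4x4 matrices as functions on indices 0..3; the tensor product A \<otimes> B
  has entry (2i+k, 2j+l) equal to A i j * B k l.\<close>
definition pmat :: "pt \<Rightarrow> nat \<Rightarrow> nat \<Rightarrow> complex" where
  "pmat p r s = (if r < 4 \<and> s < 4 then
      pauli1 (fst p) (r div 2) (s div 2) * pauli1 (snd p) (r mod 2) (s mod 2) else 0)"

definition mult4 :: "(nat \<Rightarrow> nat \<Rightarrow> complex) \<Rightarrow> (nat \<Rightarrow> nat \<Rightarrow> complex) \<Rightarrow> nat \<Rightarrow> nat \<Rightarrow> complex" where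
  "mult4 A B i j = (\<Sum>k<4. A i k * B k j)"

text \<open>The 15 points of W(3,2): nontrivial two-qubit Pauli operators (up to phase).\<close>
definition points :: "pt set" where
  "points = {(a, b). a < 4 \<and> b < 4 \<and> (a, b) \<noteq> (0, 0)}"

definition commutes :: "pt \<Rightarrow> pt \<Rightarrow> bool" where
  "commutes p q \<longleftrightarrow> (\<forall>i<4. \<forall>j<4. mult4 (pmat p) (pmat q) i j = mult4 (pmat q) (pmat p) i j)"

definition prop_prod :: "pt \<Rightarrow> pt \<Rightarrow> pt \<Rightarrow> bool" where
  "prop_prod R P Q \<longleftrightarrow> (\<exists>c::complex. \<forall>i<4. \<forall>j<4. pmat R i j = c * mult4 (pmat P) (pmat Q) i j)"

definition is_line :: "pt set \<Rightarrow> bool" where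
  "is_line L \<longleftrightarrow> (\<exists>P Q R. L = {P, Q, R} \<and> P \<in> points \<and> Q \<in> points \<and> R \<in> points \<and>
      P \<noteq> Q \<and> P \<noteq> R \<and> Q \<noteq> R \<and>
      commutes P Q \<and> commutes P R \<and> commutes Q R \<and> prop_prod R P Q)"

definition perp :: "pt \<Rightarrow> pt set" where
  "perp p = {q \<in> points. commutes p q}"

definition Q0 :: "pt set" where
  "Q0 = {(a, b). a \<in> {1, 2, 3} \<and> b \<in> {1, 2, 3}}"

definition grid_line :: "pt set \<Rightarrow> bool" where
  "grid_line L \<longleftrightarrow> is_line L \<and> L \<subseteq> Q0"

definition grid_perp :: "pt \<Rightarrow> pt set" where
  "grid_perp x = insert x (\<Union>{L. grid_line L \<and> x \<in> L})"

definition grid_ovoid :: "pt set \<Rightarrow> bool" where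
  "grid_ovoid S \<longleftrightarrow> S \<subseteq> Q0 \<and> card S = 3 \<and>
     (\<forall>x\<in>S. \<forall>y\<in>S. x \<noteq> y \<longrightarrow> \<not> (\<exists>L. grid_line L \<and> x \<in> L \<and> y \<in> L))"

definition tangential :: "pt \<Rightarrow> bool" where
  "tangential p \<longleftrightarrow> (\<exists>x\<in>Q0. perp p \<inter> Q0 = grid_perp x)"

definition transversal :: "pt \<Rightarrow> bool" where
  "transversal p \<longleftrightarrow> grid_ovoid (perp p \<inter> Q0)"

definition xstate :: "pt \<Rightarrow> (pt \<Rightarrow> real) \<Rightarrow> nat \<Rightarrow> nat \<Rightarrow> complex" where
  "xstate p c i j = (1/4) * (pmat (0, 0) i j + (\<Sum>q\<in>perp p. complex_of_real (c q) * pmat q i j))"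

definition psd4 :: "(nat \<Rightarrow> nat \<Rightarrow> complex) \<Rightarrow> bool" where
  "psd4 M \<longleftrightarrow> (\<forall>v :: nat \<Rightarrow> complex.
      (\<Sum>i<4. \<Sum>j<4. cnj (v i) * M i j * v j) \<in> \<real> \<and>
      0 \<le> Re (\<Sum>i<4. \<Sum>j<4. cnj (v i) * M i j * v j))"

text \<open>Partial transpose with respect to the second qubit.\<close>
definition ptrans :: "(nat \<Rightarrow> nat \<Rightarrow> complex) \<Rightarrow> nat \<Rightarrow> nat \<Rightarrow> complex" where
  "ptrans M r s = M (2 * (r div 2) + s mod 2) (2 * (s div 2) + r mod 2)"

definition valid :: "(nat \<Rightarrow> nat \<Rightarrow> complex) \<Rightarrow> bool" where
  "valid M \<longleftrightarrow> psd4 M"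

definition separable :: "(nat \<Rightarrow> nat \<Rightarrow> complex) \<Rightarrow> bool" where
  "separable M \<longleftrightarrow> psd4 (ptrans M)"

definition entangled :: "(nat \<Rightarrow> nat \<Rightarrow> complex) \<Rightarrow> bool" where
  "entangled M \<longleftrightarrow> \<not> psd4 (ptrans M)"

end

theory Submission imports Defs begin
lemma sum4: "(\<Sum>k<(4::nat). f k) = f 0 + f 1 + f 2 + f 3"
  by (simp add: numeral_eq_Suc lessThan_Suc add.commute add.left_commute)
lemma sum2: "(\<Sum>k<(2::nat). f k) = f 0 + f 1"
  by (simp add: numeral_eq_Suc lessThan_Suc add.commute)
lemma all4: "(\<forall>i<(4::nat). P i) \<longleftrightarrow> P 0 \<and> P 1 \<and> P 2 \<and> P 3"
  by (auto simp: numeral_eq_Suc less_Suc_eq)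
lemma lt4: "(i::nat) < 4 \<longleftrightarrow> i = 0 \<or> i = 1 \<or> i = 2 \<or> i = 3"
  by auto
lemma lt2: "(i::nat) < 2 \<longleftrightarrow> i = 0 \<or> i = 1"
  by auto

definition anti :: "nat \<Rightarrow> nat \<Rightarrow> bool" where
  "anti a c \<longleftrightarrow> a \<noteq> 0 \<and> c \<noteq> 0 \<and> a \<noteq> c"
definition m2 :: "nat \<Rightarrow> nat \<Rightarrow> nat \<Rightarrow> nat \<Rightarrow> complex" where
  "m2 a c x y = (\<Sum>k<2. pauli1 a x k * pauli1 c k y)"
lemma fact4:
  assumes "i < 4" "j < 4"
  shows "mult4 (pmat (a,b)) (pmat (c,d)) i j = m2 a c (i div 2) (j div 2) * m2 b d (i mod 2) (j mod 2)"
  using assms unfolding lt4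
  by (elim disjE; simp add: mult4_def sum4 sum2 m2_def pmat_def algebra_simps)
lemma m2_swap:
  assumes "a < 4" "c < 4" "x < 2" "y < 2"
  shows "m2 c a x y = (if anti a c then -1 else 1) * m2 a c x y"
  using assms unfolding lt4 lt2
  by (elim disjE; simp add: m2_def sum2 pauli1_def anti_def)
lemma m2_nz:
  assumes "a < 4" "c < 4"
  shows "m2 a c 0 0 \<noteq> 0 \<or> m2 a c 0 1 \<noteq> 0 \<or> m2 a c 1 0 \<noteq> 0 \<or> m2 a c 1 1 \<noteq> 0"
  using assms unfolding lt4
  by (elim disjE; simp add: m2_def sum2 pauli1_def)
lemma comm_iff:
  assumes "a < 4" "b < 4" "c < 4" "d < 4"
  shows "commutes (a,b) (c,d) \<longleftrightarrow> (anti a c \<longleftrightarrow> anti b d)"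
proof
  assume C: "commutes (a,b) (c,d)"
  show "anti a c \<longleftrightarrow> anti b d"
  proof (rule ccontr)
    assume ne: "\<not> (anti a c \<longleftrightarrow> anti b d)"
    have key: "m2 a c x y * m2 b d z w = 0" if "x < 2" "y < 2" "z < 2" "w < 2" for x y z w
    proof -
      have i: "2*x+z < 4" "2*y+w < 4" using that by auto
      have dm: "(2*x+z) div 2 = x" "(2*x+z) mod 2 = z" "(2*y+w) div 2 = y" "(2*y+w) mod 2 = w"
        using that by auto
      have "mult4 (pmat (a,b)) (pmat (c,d)) (2*x+z) (2*y+w) = mult4 (pmat (c,d)) (pmat (a,b)) (2*x+z) (2*y+w)"
        using C i unfolding commutes_def by blast
      then have "m2 a c x y * m2 b d z w = m2 c a x y * m2 d b z w"
        using fact4[OF i] dm by simp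
      also have "\<dots> = - (m2 a c x y * m2 b d z w)"
        using m2_swap[of a c x y] m2_swap[of b d z w] assms that ne by auto
      finally show ?thesis by simp
    qed
    show False using m2_nz[of a c] m2_nz[of b d] assms key[of 0 0 0 0] key[of 0 0 0 1] key[of 0 0 1 0] key[of 0 0 1 1]
      key[of 0 1 0 0] key[of 0 1 0 1] key[of 0 1 1 0] key[of 0 1 1 1]
      key[of 1 0 0 0] key[of 1 0 0 1] key[of 1 0 1 0] key[of 1 0 1 1]
      key[of 1 1 0 0] key[of 1 1 0 1] key[of 1 1 1 0] key[of 1 1 1 1]
      by auto
  qed
next
  assume E: "anti a c \<longleftrightarrow> anti b d"
  show "commutes (a,b) (c,d)" unfolding commutes_def
  proof (intro allI impI)
    fix i j :: nat assume ij: "i < 4" "j < 4"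
    have x: "i div 2 < 2" "j div 2 < 2" "i mod 2 < 2" "j mod 2 < 2" using ij by auto
    show "mult4 (pmat (a,b)) (pmat (c,d)) i j = mult4 (pmat (c,d)) (pmat (a,b)) i j"
      using fact4[OF ij, of a b c d] fact4[OF ij, of c d a b]
        m2_swap[OF assms(1,3) x(1,2)] m2_swap[OF assms(2,4) x(3,4)] E by auto
  qed
qed

lemma perp_gen:
  assumes "a < 4" "b < 4"
  shows "perp (a,b) = {(c,d). c < 4 \<and> d < 4 \<and> (c,d) \<noteq> (0,0) \<and> (anti a c \<longleftrightarrow> anti b d)}"
  using assms by (auto simp: perp_def points_def comm_iff)
lemma points_expl: "points = {(0,1), (0,2), (0,3), (1,0), (1,1), (1,2), (1,3), (2,0), (2,1), (2,2), (2,3), (3,0), (3,1), (3,2), (3,3)}"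
  by (auto simp: points_def lt4)
lemma Q0_expl: "Q0 = {(1,1), (1,2), (1,3), (2,1), (2,2), (2,3), (3,1), (3,2), (3,3)}"
  by (auto simp: Q0_def)

lemma perp_01: "perp (0,1) = {(0,1), (1,0), (1,1), (2,0), (2,1), (3,0), (3,1)}"
  by (simp add: perp_gen, auto simp: anti_def lt4)

lemma perp_02: "perp (0,2) = {(0,2), (1,0), (1,2), (2,0), (2,2), (3,0), (3,2)}"
  by (simp add: perp_gen, auto simp: anti_def lt4)

lemma perp_03: "perp (0,3) = {(0,3), (1,0), (1,3), (2,0), (2,3), (3,0), (3,3)}"
  by (simp add: perp_gen, auto simp: anti_def lt4)

lemma perp_10: "perp (1,0) = {(0,1), (0,2), (0,3), (1,0), (1,1), (1,2), (1,3)}"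
  by (simp add: perp_gen, auto simp: anti_def lt4)

lemma perp_11: "perp (1,1) = {(0,1), (1,0), (1,1), (2,2), (2,3), (3,2), (3,3)}"
  by (simp add: perp_gen, auto simp: anti_def lt4)

lemma perp_12: "perp (1,2) = {(0,2), (1,0), (1,2), (2,1), (2,3), (3,1), (3,3)}"
  by (simp add: perp_gen, auto simp: anti_def lt4)

lemma perp_13: "perp (1,3) = {(0,3), (1,0), (1,3), (2,1), (2,2), (3,1), (3,2)}"
  by (simp add: perp_gen, auto simp: anti_def lt4)

lemma perp_20: "perp (2,0) = {(0,1), (0,2), (0,3), (2,0), (2,1), (2,2), (2,3)}"
  by (simp add: perp_gen, auto simp: anti_def lt4)

lemma perp_21: "perp (2,1) = {(0,1), (1,2), (1,3), (2,0), (2,1), (3,2), (3,3)}"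
  by (simp add: perp_gen, auto simp: anti_def lt4)

lemma perp_22: "perp (2,2) = {(0,2), (1,1), (1,3), (2,0), (2,2), (3,1), (3,3)}"
  by (simp add: perp_gen, auto simp: anti_def lt4)

lemma perp_23: "perp (2,3) = {(0,3), (1,1), (1,2), (2,0), (2,3), (3,1), (3,2)}"
  by (simp add: perp_gen, auto simp: anti_def lt4)

lemma perp_30: "perp (3,0) = {(0,1), (0,2), (0,3), (3,0), (3,1), (3,2), (3,3)}"
  by (simp add: perp_gen, auto simp: anti_def lt4)

lemma perp_31: "perp (3,1) = {(0,1), (1,2), (1,3), (2,2), (2,3), (3,0), (3,1)}"
  by (simp add: perp_gen, auto simp: anti_def lt4)

lemma perp_32: "perp (3,2) = {(0,2), (1,1), (1,3), (2,1), (2,3), (3,0), (3,2)}"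
  by (simp add: perp_gen, auto simp: anti_def lt4)

lemma perp_33: "perp (3,3) = {(0,3), (1,1), (1,2), (2,1), (2,2), (3,0), (3,3)}"
  by (simp add: perp_gen, auto simp: anti_def lt4)

lemmas perp_ex = perp_01 perp_02 perp_03 perp_10 perp_11 perp_12 perp_13 perp_20 perp_21 perp_22 perp_23 perp_30 perp_31 perp_32 perp_33

lemma perpQ_01: "perp (0,1) \<inter> Q0 = {(1,1), (2,1), (3,1)}"
  unfolding perp_01 Q0_def by auto

lemma perpQ_02: "perp (0,2) \<inter> Q0 = {(1,2), (2,2), (3,2)}"
  unfolding perp_02 Q0_def by auto

lemma perpQ_03: "perp (0,3) \<inter> Q0 = {(1,3), (2,3), (3,3)}"
  unfolding perp_03 Q0_def by auto

lemma perpQ_10: "perp (1,0) \<inter> Q0 = {(1,1), (1,2), (1,3)}"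
  unfolding perp_10 Q0_def by auto

lemma perpQ_11: "perp (1,1) \<inter> Q0 = {(1,1), (2,2), (2,3), (3,2), (3,3)}"
  unfolding perp_11 Q0_def by auto

lemma perpQ_12: "perp (1,2) \<inter> Q0 = {(1,2), (2,1), (2,3), (3,1), (3,3)}"
  unfolding perp_12 Q0_def by auto

lemma perpQ_13: "perp (1,3) \<inter> Q0 = {(1,3), (2,1), (2,2), (3,1), (3,2)}"
  unfolding perp_13 Q0_def by auto

lemma perpQ_20: "perp (2,0) \<inter> Q0 = {(2,1), (2,2), (2,3)}"
  unfolding perp_20 Q0_def by auto

lemma perpQ_21: "perp (2,1) \<inter> Q0 = {(1,2), (1,3), (2,1), (3,2), (3,3)}"
  unfolding perp_21 Q0_def by auto

lemma perpQ_22: "perp (2,2) \<inter> Q0 = {(1,1), (1,3), (2,2), (3,1), (3,3)}"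
  unfolding perp_22 Q0_def by auto

lemma perpQ_23: "perp (2,3) \<inter> Q0 = {(1,1), (1,2), (2,3), (3,1), (3,2)}"
  unfolding perp_23 Q0_def by auto

lemma perpQ_30: "perp (3,0) \<inter> Q0 = {(3,1), (3,2), (3,3)}"
  unfolding perp_30 Q0_def by auto

lemma perpQ_31: "perp (3,1) \<inter> Q0 = {(1,2), (1,3), (2,2), (2,3), (3,1)}"
  unfolding perp_31 Q0_def by auto

lemma perpQ_32: "perp (3,2) \<inter> Q0 = {(1,1), (1,3), (2,1), (2,3), (3,2)}"
  unfolding perp_32 Q0_def by auto

lemma perpQ_33: "perp (3,3) \<inter> Q0 = {(1,1), (1,2), (2,1), (2,2), (3,3)}"
  unfolding perp_33 Q0_def by auto

lemmas perpQ_ex = perpQ_01 perpQ_02 perpQ_03 perpQ_10 perpQ_11 perpQ_12 perpQ_13 perpQ_20 perpQ_21 perpQ_22 perpQ_23 perpQ_30 perpQ_31 perpQ_32 perpQ_33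
lemma commutes_sym: "commutes x y \<Longrightarrow> commutes y x"
  unfolding commutes_def by metis
lemma commutes_refl: "commutes x x"
  unfolding commutes_def by simp
lemma Q0_points: "Q0 \<subseteq> points"
  by (auto simp: Q0_def points_def)
lemma prop_prodI: "(\<forall>i<4. \<forall>j<4. pmat R i j = c * mult4 (pmat P) (pmat Q) i j) \<Longrightarrow> prop_prod R P Q"
  unfolding prop_prod_def by blast

lemma line_1: "grid_line {(1,1), (2,2), (3,3)}"
proof -
  have pp: "prop_prod (3,3) (1,1) (2,2)"
    by (rule prop_prodI[where c="-1"]) (simp add: all4 fact4 m2_def sum2 pmat_def pauli1_def)
  show ?thesis unfolding grid_line_def is_line_def
    apply (rule conjI)
     apply (rule exI[of _ "(1,1)"], rule exI[of _ "(2,2)"], rule exI[of _ "(3,3)"])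
    using pp by (auto simp: points_def comm_iff anti_def Q0_def)
qed

lemma line_2: "grid_line {(1,1), (2,3), (3,2)}"
proof -
  have pp: "prop_prod (3,2) (1,1) (2,3)"
    by (rule prop_prodI[where c="1"]) (simp add: all4 fact4 m2_def sum2 pmat_def pauli1_def)
  show ?thesis unfolding grid_line_def is_line_def
    apply (rule conjI)
     apply (rule exI[of _ "(1,1)"], rule exI[of _ "(2,3)"], rule exI[of _ "(3,2)"])
    using pp by (auto simp: points_def comm_iff anti_def Q0_def)
qed

lemma line_3: "grid_line {(1,2), (2,1), (3,3)}"
proof -
  have pp: "prop_prod (3,3) (1,2) (2,1)"
    by (rule prop_prodI[where c="1"]) (simp add: all4 fact4 m2_def sum2 pmat_def pauli1_def)
  show ?thesis unfolding grid_line_def is_line_def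
    apply (rule conjI)
     apply (rule exI[of _ "(1,2)"], rule exI[of _ "(2,1)"], rule exI[of _ "(3,3)"])
    using pp by (auto simp: points_def comm_iff anti_def Q0_def)
qed

lemma line_4: "grid_line {(1,2), (2,3), (3,1)}"
proof -
  have pp: "prop_prod (3,1) (1,2) (2,3)"
    by (rule prop_prodI[where c="-1"]) (simp add: all4 fact4 m2_def sum2 pmat_def pauli1_def)
  show ?thesis unfolding grid_line_def is_line_def
    apply (rule conjI)
     apply (rule exI[of _ "(1,2)"], rule exI[of _ "(2,3)"], rule exI[of _ "(3,1)"])
    using pp by (auto simp: points_def comm_iff anti_def Q0_def)
qed

lemma line_5: "grid_line {(1,3), (2,1), (3,2)}"
proof -
  have pp: "prop_prod (3,2) (1,3) (2,1)"
    by (rule prop_prodI[where c="-1"]) (simp add: all4 fact4 m2_def sum2 pmat_def pauli1_def)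
  show ?thesis unfolding grid_line_def is_line_def
    apply (rule conjI)
     apply (rule exI[of _ "(1,3)"], rule exI[of _ "(2,1)"], rule exI[of _ "(3,2)"])
    using pp by (auto simp: points_def comm_iff anti_def Q0_def)
qed

lemma line_6: "grid_line {(1,3), (2,2), (3,1)}"
proof -
  have pp: "prop_prod (3,1) (1,3) (2,2)"
    by (rule prop_prodI[where c="1"]) (simp add: all4 fact4 m2_def sum2 pmat_def pauli1_def)
  show ?thesis unfolding grid_line_def is_line_def
    apply (rule conjI)
     apply (rule exI[of _ "(1,3)"], rule exI[of _ "(2,2)"], rule exI[of _ "(3,1)"])
    using pp by (auto simp: points_def comm_iff anti_def Q0_def)
qed

lemmas lines = line_1 line_2 line_3 line_4 line_5 line_6

lemma gl_comm: "grid_line L \<Longrightarrow> x \<in> L \<Longrightarrow> y \<in> L \<Longrightarrow> commutes x y"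
  unfolding grid_line_def is_line_def using commutes_sym commutes_refl by blast
lemma gl_Q0: "grid_line L \<Longrightarrow> L \<subseteq> Q0"
  unfolding grid_line_def by blast

lemma cover_11: "y \<in> perp (1,1) \<inter> Q0 \<Longrightarrow> y = (1,1) \<or> (\<exists>L. grid_line L \<and> (1,1) \<in> L \<and> y \<in> L)"
proof -
  have "\<exists>L. grid_line L \<and> (1,1) \<in> L \<and> (2,2) \<in> L" by (rule exI[of _ "{(1,1), (2,2), (3,3)}"], rule conjI[OF line_1], simp)
  moreover
  have "\<exists>L. grid_line L \<and> (1,1) \<in> L \<and> (2,3) \<in> L" by (rule exI[of _ "{(1,1), (2,3), (3,2)}"], rule conjI[OF line_2], simp)
  moreover
  have "\<exists>L. grid_line L \<and> (1,1) \<in> L \<and> (3,2) \<in> L" by (rule exI[of _ "{(1,1), (2,3), (3,2)}"], rule conjI[OF line_2], simp)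
  moreover
  have "\<exists>L. grid_line L \<and> (1,1) \<in> L \<and> (3,3) \<in> L" by (rule exI[of _ "{(1,1), (2,2), (3,3)}"], rule conjI[OF line_1], simp)
  ultimately show "y \<in> perp (1,1) \<inter> Q0 \<Longrightarrow> ?thesis" unfolding perpQ_11 by blast
qed

lemma cover_12: "y \<in> perp (1,2) \<inter> Q0 \<Longrightarrow> y = (1,2) \<or> (\<exists>L. grid_line L \<and> (1,2) \<in> L \<and> y \<in> L)"
proof -
  have "\<exists>L. grid_line L \<and> (1,2) \<in> L \<and> (2,1) \<in> L" by (rule exI[of _ "{(1,2), (2,1), (3,3)}"], rule conjI[OF line_3], simp)
  moreover
  have "\<exists>L. grid_line L \<and> (1,2) \<in> L \<and> (2,3) \<in> L" by (rule exI[of _ "{(1,2), (2,3), (3,1)}"], rule conjI[OF line_4], simp)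
  moreover
  have "\<exists>L. grid_line L \<and> (1,2) \<in> L \<and> (3,1) \<in> L" by (rule exI[of _ "{(1,2), (2,3), (3,1)}"], rule conjI[OF line_4], simp)
  moreover
  have "\<exists>L. grid_line L \<and> (1,2) \<in> L \<and> (3,3) \<in> L" by (rule exI[of _ "{(1,2), (2,1), (3,3)}"], rule conjI[OF line_3], simp)
  ultimately show "y \<in> perp (1,2) \<inter> Q0 \<Longrightarrow> ?thesis" unfolding perpQ_12 by blast
qed

lemma cover_13: "y \<in> perp (1,3) \<inter> Q0 \<Longrightarrow> y = (1,3) \<or> (\<exists>L. grid_line L \<and> (1,3) \<in> L \<and> y \<in> L)"
proof -
  have "\<exists>L. grid_line L \<and> (1,3) \<in> L \<and> (2,1) \<in> L" by (rule exI[of _ "{(1,3), (2,1), (3,2)}"], rule conjI[OF line_5], simp)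
  moreover
  have "\<exists>L. grid_line L \<and> (1,3) \<in> L \<and> (2,2) \<in> L" by (rule exI[of _ "{(1,3), (2,2), (3,1)}"], rule conjI[OF line_6], simp)
  moreover
  have "\<exists>L. grid_line L \<and> (1,3) \<in> L \<and> (3,1) \<in> L" by (rule exI[of _ "{(1,3), (2,2), (3,1)}"], rule conjI[OF line_6], simp)
  moreover
  have "\<exists>L. grid_line L \<and> (1,3) \<in> L \<and> (3,2) \<in> L" by (rule exI[of _ "{(1,3), (2,1), (3,2)}"], rule conjI[OF line_5], simp)
  ultimately show "y \<in> perp (1,3) \<inter> Q0 \<Longrightarrow> ?thesis" unfolding perpQ_13 by blast
qed

lemma cover_21: "y \<in> perp (2,1) \<inter> Q0 \<Longrightarrow> y = (2,1) \<or> (\<exists>L. grid_line L \<and> (2,1) \<in> L \<and> y \<in> L)"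
proof -
  have "\<exists>L. grid_line L \<and> (2,1) \<in> L \<and> (1,2) \<in> L" by (rule exI[of _ "{(1,2), (2,1), (3,3)}"], rule conjI[OF line_3], simp)
  moreover
  have "\<exists>L. grid_line L \<and> (2,1) \<in> L \<and> (1,3) \<in> L" by (rule exI[of _ "{(1,3), (2,1), (3,2)}"], rule conjI[OF line_5], simp)
  moreover
  have "\<exists>L. grid_line L \<and> (2,1) \<in> L \<and> (3,2) \<in> L" by (rule exI[of _ "{(1,3), (2,1), (3,2)}"], rule conjI[OF line_5], simp)
  moreover
  have "\<exists>L. grid_line L \<and> (2,1) \<in> L \<and> (3,3) \<in> L" by (rule exI[of _ "{(1,2), (2,1), (3,3)}"], rule conjI[OF line_3], simp)
  ultimately show "y \<in> perp (2,1) \<inter> Q0 \<Longrightarrow> ?thesis" unfolding perpQ_21 by blast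
qed

lemma cover_22: "y \<in> perp (2,2) \<inter> Q0 \<Longrightarrow> y = (2,2) \<or> (\<exists>L. grid_line L \<and> (2,2) \<in> L \<and> y \<in> L)"
proof -
  have "\<exists>L. grid_line L \<and> (2,2) \<in> L \<and> (1,1) \<in> L" by (rule exI[of _ "{(1,1), (2,2), (3,3)}"], rule conjI[OF line_1], simp)
  moreover
  have "\<exists>L. grid_line L \<and> (2,2) \<in> L \<and> (1,3) \<in> L" by (rule exI[of _ "{(1,3), (2,2), (3,1)}"], rule conjI[OF line_6], simp)
  moreover
  have "\<exists>L. grid_line L \<and> (2,2) \<in> L \<and> (3,1) \<in> L" by (rule exI[of _ "{(1,3), (2,2), (3,1)}"], rule conjI[OF line_6], simp)
  moreover
  have "\<exists>L. grid_line L \<and> (2,2) \<in> L \<and> (3,3) \<in> L" by (rule exI[of _ "{(1,1), (2,2), (3,3)}"], rule conjI[OF line_1], simp)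
  ultimately show "y \<in> perp (2,2) \<inter> Q0 \<Longrightarrow> ?thesis" unfolding perpQ_22 by blast
qed

lemma cover_23: "y \<in> perp (2,3) \<inter> Q0 \<Longrightarrow> y = (2,3) \<or> (\<exists>L. grid_line L \<and> (2,3) \<in> L \<and> y \<in> L)"
proof -
  have "\<exists>L. grid_line L \<and> (2,3) \<in> L \<and> (1,1) \<in> L" by (rule exI[of _ "{(1,1), (2,3), (3,2)}"], rule conjI[OF line_2], simp)
  moreover
  have "\<exists>L. grid_line L \<and> (2,3) \<in> L \<and> (1,2) \<in> L" by (rule exI[of _ "{(1,2), (2,3), (3,1)}"], rule conjI[OF line_4], simp)
  moreover
  have "\<exists>L. grid_line L \<and> (2,3) \<in> L \<and> (3,1) \<in> L" by (rule exI[of _ "{(1,2), (2,3), (3,1)}"], rule conjI[OF line_4], simp)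
  moreover
  have "\<exists>L. grid_line L \<and> (2,3) \<in> L \<and> (3,2) \<in> L" by (rule exI[of _ "{(1,1), (2,3), (3,2)}"], rule conjI[OF line_2], simp)
  ultimately show "y \<in> perp (2,3) \<inter> Q0 \<Longrightarrow> ?thesis" unfolding perpQ_23 by blast
qed

lemma cover_31: "y \<in> perp (3,1) \<inter> Q0 \<Longrightarrow> y = (3,1) \<or> (\<exists>L. grid_line L \<and> (3,1) \<in> L \<and> y \<in> L)"
proof -
  have "\<exists>L. grid_line L \<and> (3,1) \<in> L \<and> (1,2) \<in> L" by (rule exI[of _ "{(1,2), (2,3), (3,1)}"], rule conjI[OF line_4], simp)
  moreover
  have "\<exists>L. grid_line L \<and> (3,1) \<in> L \<and> (1,3) \<in> L" by (rule exI[of _ "{(1,3), (2,2), (3,1)}"], rule conjI[OF line_6], simp)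
  moreover
  have "\<exists>L. grid_line L \<and> (3,1) \<in> L \<and> (2,2) \<in> L" by (rule exI[of _ "{(1,3), (2,2), (3,1)}"], rule conjI[OF line_6], simp)
  moreover
  have "\<exists>L. grid_line L \<and> (3,1) \<in> L \<and> (2,3) \<in> L" by (rule exI[of _ "{(1,2), (2,3), (3,1)}"], rule conjI[OF line_4], simp)
  ultimately show "y \<in> perp (3,1) \<inter> Q0 \<Longrightarrow> ?thesis" unfolding perpQ_31 by blast
qed

lemma cover_32: "y \<in> perp (3,2) \<inter> Q0 \<Longrightarrow> y = (3,2) \<or> (\<exists>L. grid_line L \<and> (3,2) \<in> L \<and> y \<in> L)"
proof -
  have "\<exists>L. grid_line L \<and> (3,2) \<in> L \<and> (1,1) \<in> L" by (rule exI[of _ "{(1,1), (2,3), (3,2)}"], rule conjI[OF line_2], simp)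
  moreover
  have "\<exists>L. grid_line L \<and> (3,2) \<in> L \<and> (1,3) \<in> L" by (rule exI[of _ "{(1,3), (2,1), (3,2)}"], rule conjI[OF line_5], simp)
  moreover
  have "\<exists>L. grid_line L \<and> (3,2) \<in> L \<and> (2,1) \<in> L" by (rule exI[of _ "{(1,3), (2,1), (3,2)}"], rule conjI[OF line_5], simp)
  moreover
  have "\<exists>L. grid_line L \<and> (3,2) \<in> L \<and> (2,3) \<in> L" by (rule exI[of _ "{(1,1), (2,3), (3,2)}"], rule conjI[OF line_2], simp)
  ultimately show "y \<in> perp (3,2) \<inter> Q0 \<Longrightarrow> ?thesis" unfolding perpQ_32 by blast
qed

lemma cover_33: "y \<in> perp (3,3) \<inter> Q0 \<Longrightarrow> y = (3,3) \<or> (\<exists>L. grid_line L \<and> (3,3) \<in> L \<and> y \<in> L)"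
proof -
  have "\<exists>L. grid_line L \<and> (3,3) \<in> L \<and> (1,1) \<in> L" by (rule exI[of _ "{(1,1), (2,2), (3,3)}"], rule conjI[OF line_1], simp)
  moreover
  have "\<exists>L. grid_line L \<and> (3,3) \<in> L \<and> (1,2) \<in> L" by (rule exI[of _ "{(1,2), (2,1), (3,3)}"], rule conjI[OF line_3], simp)
  moreover
  have "\<exists>L. grid_line L \<and> (3,3) \<in> L \<and> (2,1) \<in> L" by (rule exI[of _ "{(1,2), (2,1), (3,3)}"], rule conjI[OF line_3], simp)
  moreover
  have "\<exists>L. grid_line L \<and> (3,3) \<in> L \<and> (2,2) \<in> L" by (rule exI[of _ "{(1,1), (2,2), (3,3)}"], rule conjI[OF line_1], simp)
  ultimately show "y \<in> perp (3,3) \<inter> Q0 \<Longrightarrow> ?thesis" unfolding perpQ_33 by blast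
qed

lemma Q0_cases: "x \<in> Q0 \<Longrightarrow> x = (1,1) \<or> x = (1,2) \<or> x = (1,3) \<or> x = (2,1) \<or> x = (2,2) \<or> x = (2,3) \<or> x = (3,1) \<or> x = (3,2) \<or> x = (3,3)"
  unfolding Q0_expl by blast

lemma pts_cases: "x \<in> points \<Longrightarrow> x \<notin> Q0 \<Longrightarrow> x = (0,1) \<or> x = (0,2) \<or> x = (0,3) \<or> x = (1,0) \<or> x = (2,0) \<or> x = (3,0)"
  unfolding points_expl Q0_expl by blast

lemmas cover_ex = cover_11 cover_12 cover_13 cover_21 cover_22 cover_23 cover_31 cover_32 cover_33

lemma cover: "x \<in> Q0 \<Longrightarrow> y \<in> perp x \<inter> Q0 \<Longrightarrow> y = x \<or> (\<exists>L. grid_line L \<and> x \<in> L \<and> y \<in> L)"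
  by (drule Q0_cases, elim disjE; hypsubst; rule cover_ex)

lemma gp: assumes "x \<in> Q0" shows "grid_perp x = perp x \<inter> Q0"
proof
  show "grid_perp x \<subseteq> perp x \<inter> Q0"
  proof
    fix y assume "y \<in> grid_perp x"
    then have "y = x \<or> (\<exists>L. grid_line L \<and> x \<in> L \<and> y \<in> L)" unfolding grid_perp_def by blast
    then have "y \<in> Q0 \<and> commutes x y" using assms gl_comm gl_Q0 commutes_refl by blast
    then show "y \<in> perp x \<inter> Q0" using Q0_points unfolding perp_def by blast
  qed
  show "perp x \<inter> Q0 \<subseteq> grid_perp x"
    unfolding grid_perp_def using cover[OF assms] by blast
qed
lemma card_gp: "x \<in> Q0 \<Longrightarrow> card (perp x \<inter> Q0) = 5"
  by (drule Q0_cases, elim disjE; hypsubst; simp only: perpQ_ex; simp)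
lemma tang_Q0: assumes "p \<in> Q0" shows "tangential p"
  unfolding tangential_def
proof (rule bexI[of _ p])
  show "perp p \<inter> Q0 = grid_perp p" using gp[OF assms] by simp
qed (rule assms)
lemma card3: "p \<in> points \<Longrightarrow> p \<notin> Q0 \<Longrightarrow> card (perp p \<inter> Q0) = 3"
  by (drule pts_cases, assumption, elim disjE; hypsubst; simp only: perpQ_ex; simp)
lemma not_tang: assumes "p \<in> points" "p \<notin> Q0" shows "\<not> tangential p"
proof
  assume "tangential p"
  then obtain x where x: "x \<in> Q0" "perp p \<inter> Q0 = grid_perp x" unfolding tangential_def by blast
  then have "card (perp p \<inter> Q0) = 5" using gp[OF x(1)] card_gp[OF x(1)] by simp
  then show False using card3[OF assms] by simp
qed
lemma not_trans: "p \<in> Q0 \<Longrightarrow> \<not> transversal p"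
  unfolding transversal_def grid_ovoid_def using card_gp by simp
lemma nc3: "p \<in> points \<Longrightarrow> p \<notin> Q0 \<Longrightarrow> \<forall>x\<in>perp p \<inter> Q0. \<forall>y\<in>perp p \<inter> Q0. x \<noteq> y \<longrightarrow> \<not> commutes x y"
  by (drule pts_cases, assumption, elim disjE; hypsubst; simp only: perpQ_ex; simp add: comm_iff anti_def)
lemma trans_nQ0: "p \<in> points \<Longrightarrow> p \<notin> Q0 \<Longrightarrow> transversal p"
  unfolding transversal_def grid_ovoid_def using card3 nc3 gl_comm by blast

lemma psd_rank1:
  assumes e: "\<And>i j. i < 4 \<Longrightarrow> j < 4 \<Longrightarrow> M i j = complex_of_real r * w i * cnj (w j)" and r: "r \<ge> 0"
  shows "psd4 M"
  unfolding psd4_def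
proof
  fix v :: "nat \<Rightarrow> complex"
  define z where "z = (\<Sum>j<4. cnj (w j) * v j)"
  have "(\<Sum>i<4. \<Sum>j<4. cnj (v i) * M i j * v j) = (\<Sum>i<4. \<Sum>j<4. complex_of_real r * ((cnj (v i) * w i) * (cnj (w j) * v j)))"
    using e by (intro sum.cong refl) (simp add: mult_ac)
  also have "\<dots> = complex_of_real r * ((\<Sum>i<4. cnj (v i) * w i) * z)"
    unfolding z_def sum_product by (simp only: sum_distrib_left)
  also have "(\<Sum>i<4. cnj (v i) * w i) = cnj z"
    unfolding z_def by (simp add: mult.commute)
  also have "complex_of_real r * (cnj z * z) = complex_of_real (r * ((Re z)\<^sup>2 + (Im z)\<^sup>2))"
    using complex_mult_cnj[of z] by (simp add: mult.commute)
  finally have eq: "(\<Sum>i<4. \<Sum>j<4. cnj (v i) * M i j * v j) = complex_of_real (r * ((Re z)\<^sup>2 + (Im z)\<^sup>2))" .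
  show "(\<Sum>i<4. \<Sum>j<4. cnj (v i) * M i j * v j) \<in> \<real> \<and> 0 \<le> Re (\<Sum>i<4. \<Sum>j<4. cnj (v i) * M i j * v j)"
    unfolding eq using r by simp
qed

lemma psd_neg: "psd4 M \<Longrightarrow> 0 \<le> Re (\<Sum>i<4. \<Sum>j<4. cnj (v i) * M i j * v j)"
  unfolding psd4_def by blast

lemma reidx:
  assumes "\<And>i. i < 4 \<Longrightarrow> \<sigma> i < (4::nat)" "\<And>i. i < 4 \<Longrightarrow> \<sigma> (\<sigma> i) = i"
  shows "(\<Sum>i<4. f (\<sigma> i)) = (\<Sum>i<(4::nat). f i)"
  by (rule sum.reindex_bij_witness[of _ \<sigma> \<sigma>]) (use assms in auto)

lemma psd_perm:
  assumes e: "\<And>i j. i < 4 \<Longrightarrow> j < 4 \<Longrightarrow> N i j = M (\<sigma> i) (\<sigma> j)"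
    and s1: "\<And>i. i < 4 \<Longrightarrow> \<sigma> i < (4::nat)" and s2: "\<And>i. i < 4 \<Longrightarrow> \<sigma> (\<sigma> i) = i"
    and M: "psd4 M"
  shows "psd4 N"
  unfolding psd4_def
proof
  fix v :: "nat \<Rightarrow> complex"
  define u where "u = (\<lambda>i. v (\<sigma> i))"
  have "(\<Sum>i<4. \<Sum>j<4. cnj (v i) * N i j * v j) = (\<Sum>i<4. \<Sum>j<4. cnj (u (\<sigma> i)) * M (\<sigma> i) (\<sigma> j) * u (\<sigma> j))"
    using e s2 unfolding u_def by (intro sum.cong refl) simp
  also have "\<dots> = (\<Sum>i<4. \<Sum>j<4. cnj (u i) * M i (\<sigma> j) * u (\<sigma> j))"
    by (rule reidx[OF s1 s2, where f = "\<lambda>k. \<Sum>j<4. cnj (u k) * M k (\<sigma> j) * u (\<sigma> j)"])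
  also have "\<dots> = (\<Sum>i<4. \<Sum>j<4. cnj (u i) * M i j * u j)"
    by (intro sum.cong refl reidx[OF s1 s2, where f = "\<lambda>k. cnj (u _) * M _ k * u k"])
  finally have eq: "(\<Sum>i<4. \<Sum>j<4. cnj (v i) * N i j * v j) = (\<Sum>i<4. \<Sum>j<4. cnj (u i) * M i j * u j)" .
  show "(\<Sum>i<4. \<Sum>j<4. cnj (v i) * N i j * v j) \<in> \<real> \<and> 0 \<le> Re (\<Sum>i<4. \<Sum>j<4. cnj (v i) * N i j * v j)"
    unfolding eq using M unfolding psd4_def by blast
qed

lemma psd_trans:
  assumes e: "\<And>i j. i < 4 \<Longrightarrow> j < 4 \<Longrightarrow> N i j = M j i" and M: "psd4 M"
  shows "psd4 N"
  unfolding psd4_def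
proof
  fix v :: "nat \<Rightarrow> complex"
  define u where "u = (\<lambda>i. cnj (v i))"
  have "(\<Sum>i<4. \<Sum>j<4. cnj (v i) * N i j * v j) = (\<Sum>i<4. \<Sum>j<4. cnj (u j) * M j i * u i)"
    using e unfolding u_def by (intro sum.cong refl) (simp add: mult_ac)
  also have "\<dots> = (\<Sum>j<4. \<Sum>i<4. cnj (u j) * M j i * u i)"
    by (rule sum.swap)
  finally have eq: "(\<Sum>i<4. \<Sum>j<4. cnj (v i) * N i j * v j) = (\<Sum>i<4. \<Sum>j<4. cnj (u i) * M i j * u j)" .
  show "(\<Sum>i<4. \<Sum>j<4. cnj (v i) * N i j * v j) \<in> \<real> \<and> 0 \<le> Re (\<Sum>i<4. \<Sum>j<4. cnj (v i) * N i j * v j)"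
    unfolding eq using M unfolding psd4_def by blast
qed

lemma ent_11: "valid (xstate (1,1) (\<lambda>q. if q = (1,1) then 1 else if q = (2,2) then 1 else if q = (3,3) then -1 else 0)) \<and> entangled (xstate (1,1) (\<lambda>q. if q = (1,1) then 1 else if q = (2,2) then 1 else if q = (3,3) then -1 else 0))"
  (is "valid ?M \<and> entangled ?M")
proof -
  define M where "M = ?M"
  define W :: "nat \<Rightarrow> complex" where "W = (\<lambda>i. if i = 0 then 0 else if i = 1 then 1 else if i = 2 then 1 else 0)"
  define V :: "nat \<Rightarrow> complex" where "V = (\<lambda>i. if i = 0 then 1 else if i = 1 then 0 else if i = 2 then 0 else -1)"
  have E: "M i j = complex_of_real (1/2) * W i * cnj (W j)" if "i < 4" "j < 4" for i j
    using that unfolding lt4 W_def M_def xstate_def perp_11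
    by (elim disjE; simp add: pmat_def pauli1_def)
  have v: "valid M" unfolding valid_def by (rule psd_rank1[OF E]) auto
  have "Re (\<Sum>i<4. \<Sum>j<4. cnj (V i) * ptrans M i j * V j) < 0"
    by (simp add: sum4 ptrans_def E W_def V_def)
  then have "entangled M" unfolding entangled_def using psd_neg[of "ptrans M" V] by linarith
  with v show ?thesis unfolding M_def by blast
qed

lemma ent_12: "valid (xstate (1,2) (\<lambda>q. if q = (1,2) then 1 else if q = (2,1) then 1 else if q = (3,3) then 1 else 0)) \<and> entangled (xstate (1,2) (\<lambda>q. if q = (1,2) then 1 else if q = (2,1) then 1 else if q = (3,3) then 1 else 0))"
  (is "valid ?M \<and> entangled ?M")
proof -
  define M where "M = ?M"
  define W :: "nat \<Rightarrow> complex" where "W = (\<lambda>i. if i = 0 then 1 else if i = 1 then 0 else if i = 2 then 0 else \<i>)"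
  define V :: "nat \<Rightarrow> complex" where "V = (\<lambda>i. if i = 0 then 0 else if i = 1 then 1 else if i = 2 then -\<i> else 0)"
  have E: "M i j = complex_of_real (1/2) * W i * cnj (W j)" if "i < 4" "j < 4" for i j
    using that unfolding lt4 W_def M_def xstate_def perp_12
    by (elim disjE; simp add: pmat_def pauli1_def)
  have v: "valid M" unfolding valid_def by (rule psd_rank1[OF E]) auto
  have "Re (\<Sum>i<4. \<Sum>j<4. cnj (V i) * ptrans M i j * V j) < 0"
    by (simp add: sum4 ptrans_def E W_def V_def)
  then have "entangled M" unfolding entangled_def using psd_neg[of "ptrans M" V] by linarith
  with v show ?thesis unfolding M_def by blast
qed

lemma ent_13: "valid (xstate (1,3) (\<lambda>q. if q = (1,3) then 1 else if q = (2,1) then 1 else if q = (3,2) then -1 else 0)) \<and> entangled (xstate (1,3) (\<lambda>q. if q = (1,3) then 1 else if q = (2,1) then 1 else if q = (3,2) then -1 else 0))"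
  (is "valid ?M \<and> entangled ?M")
proof -
  define M where "M = ?M"
  define W :: "nat \<Rightarrow> complex" where "W = (\<lambda>i. if i = 0 then 1 else if i = 1 then -\<i> else if i = 2 then 1 else \<i>)"
  define V :: "nat \<Rightarrow> complex" where "V = (\<lambda>i. if i = 0 then 0 else if i = 1 then 1 else if i = 2 then -\<i> else 1)"
  have E: "M i j = complex_of_real (1/4) * W i * cnj (W j)" if "i < 4" "j < 4" for i j
    using that unfolding lt4 W_def M_def xstate_def perp_13
    by (elim disjE; simp add: pmat_def pauli1_def)
  have v: "valid M" unfolding valid_def by (rule psd_rank1[OF E]) auto
  have "Re (\<Sum>i<4. \<Sum>j<4. cnj (V i) * ptrans M i j * V j) < 0"
    by (simp add: sum4 ptrans_def E W_def V_def)
  then have "entangled M" unfolding entangled_def using psd_neg[of "ptrans M" V] by linarith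
  with v show ?thesis unfolding M_def by blast
qed

lemma ent_21: "valid (xstate (2,1) (\<lambda>q. if q = (1,2) then 1 else if q = (2,1) then 1 else if q = (3,3) then 1 else 0)) \<and> entangled (xstate (2,1) (\<lambda>q. if q = (1,2) then 1 else if q = (2,1) then 1 else if q = (3,3) then 1 else 0))"
  (is "valid ?M \<and> entangled ?M")
proof -
  define M where "M = ?M"
  define W :: "nat \<Rightarrow> complex" where "W = (\<lambda>i. if i = 0 then 1 else if i = 1 then 0 else if i = 2 then 0 else \<i>)"
  define V :: "nat \<Rightarrow> complex" where "V = (\<lambda>i. if i = 0 then 0 else if i = 1 then 1 else if i = 2 then -\<i> else 0)"
  have E: "M i j = complex_of_real (1/2) * W i * cnj (W j)" if "i < 4" "j < 4" for i j
    using that unfolding lt4 W_def M_def xstate_def perp_21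
    by (elim disjE; simp add: pmat_def pauli1_def)
  have v: "valid M" unfolding valid_def by (rule psd_rank1[OF E]) auto
  have "Re (\<Sum>i<4. \<Sum>j<4. cnj (V i) * ptrans M i j * V j) < 0"
    by (simp add: sum4 ptrans_def E W_def V_def)
  then have "entangled M" unfolding entangled_def using psd_neg[of "ptrans M" V] by linarith
  with v show ?thesis unfolding M_def by blast
qed

lemma ent_22: "valid (xstate (2,2) (\<lambda>q. if q = (1,1) then 1 else if q = (2,2) then 1 else if q = (3,3) then -1 else 0)) \<and> entangled (xstate (2,2) (\<lambda>q. if q = (1,1) then 1 else if q = (2,2) then 1 else if q = (3,3) then -1 else 0))"
  (is "valid ?M \<and> entangled ?M")
proof -
  define M where "M = ?M"
  define W :: "nat \<Rightarrow> complex" where "W = (\<lambda>i. if i = 0 then 0 else if i = 1 then 1 else if i = 2 then 1 else 0)"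
  define V :: "nat \<Rightarrow> complex" where "V = (\<lambda>i. if i = 0 then 1 else if i = 1 then 0 else if i = 2 then 0 else -1)"
  have E: "M i j = complex_of_real (1/2) * W i * cnj (W j)" if "i < 4" "j < 4" for i j
    using that unfolding lt4 W_def M_def xstate_def perp_22
    by (elim disjE; simp add: pmat_def pauli1_def)
  have v: "valid M" unfolding valid_def by (rule psd_rank1[OF E]) auto
  have "Re (\<Sum>i<4. \<Sum>j<4. cnj (V i) * ptrans M i j * V j) < 0"
    by (simp add: sum4 ptrans_def E W_def V_def)
  then have "entangled M" unfolding entangled_def using psd_neg[of "ptrans M" V] by linarith
  with v show ?thesis unfolding M_def by blast
qed

lemma ent_23: "valid (xstate (2,3) (\<lambda>q. if q = (1,1) then 1 else if q = (2,3) then 1 else if q = (3,2) then 1 else 0)) \<and> entangled (xstate (2,3) (\<lambda>q. if q = (1,1) then 1 else if q = (2,3) then 1 else if q = (3,2) then 1 else 0))"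
  (is "valid ?M \<and> entangled ?M")
proof -
  define M where "M = ?M"
  define W :: "nat \<Rightarrow> complex" where "W = (\<lambda>i. if i = 0 then 1 else if i = 1 then \<i> else if i = 2 then \<i> else 1)"
  define V :: "nat \<Rightarrow> complex" where "V = (\<lambda>i. if i = 0 then 0 else if i = 1 then 1 else if i = 2 then -1 else \<i>)"
  have E: "M i j = complex_of_real (1/4) * W i * cnj (W j)" if "i < 4" "j < 4" for i j
    using that unfolding lt4 W_def M_def xstate_def perp_23
    by (elim disjE; simp add: pmat_def pauli1_def)
  have v: "valid M" unfolding valid_def by (rule psd_rank1[OF E]) auto
  have "Re (\<Sum>i<4. \<Sum>j<4. cnj (V i) * ptrans M i j * V j) < 0"
    by (simp add: sum4 ptrans_def E W_def V_def)
  then have "entangled M" unfolding entangled_def using psd_neg[of "ptrans M" V] by linarith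
  with v show ?thesis unfolding M_def by blast
qed

lemma ent_31: "valid (xstate (3,1) (\<lambda>q. if q = (1,2) then 1 else if q = (2,3) then 1 else if q = (3,1) then -1 else 0)) \<and> entangled (xstate (3,1) (\<lambda>q. if q = (1,2) then 1 else if q = (2,3) then 1 else if q = (3,1) then -1 else 0))"
  (is "valid ?M \<and> entangled ?M")
proof -
  define M where "M = ?M"
  define W :: "nat \<Rightarrow> complex" where "W = (\<lambda>i. if i = 0 then 1 else if i = 1 then -1 else if i = 2 then \<i> else \<i>)"
  define V :: "nat \<Rightarrow> complex" where "V = (\<lambda>i. if i = 0 then 0 else if i = 1 then 1 else if i = 2 then -\<i> else \<i>)"
  have E: "M i j = complex_of_real (1/4) * W i * cnj (W j)" if "i < 4" "j < 4" for i j
    using that unfolding lt4 W_def M_def xstate_def perp_31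
    by (elim disjE; simp add: pmat_def pauli1_def)
  have v: "valid M" unfolding valid_def by (rule psd_rank1[OF E]) auto
  have "Re (\<Sum>i<4. \<Sum>j<4. cnj (V i) * ptrans M i j * V j) < 0"
    by (simp add: sum4 ptrans_def E W_def V_def)
  then have "entangled M" unfolding entangled_def using psd_neg[of "ptrans M" V] by linarith
  with v show ?thesis unfolding M_def by blast
qed

lemma ent_32: "valid (xstate (3,2) (\<lambda>q. if q = (1,1) then 1 else if q = (2,3) then 1 else if q = (3,2) then 1 else 0)) \<and> entangled (xstate (3,2) (\<lambda>q. if q = (1,1) then 1 else if q = (2,3) then 1 else if q = (3,2) then 1 else 0))"
  (is "valid ?M \<and> entangled ?M")
proof -
  define M where "M = ?M"
  define W :: "nat \<Rightarrow> complex" where "W = (\<lambda>i. if i = 0 then 1 else if i = 1 then \<i> else if i = 2 then \<i> else 1)"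
  define V :: "nat \<Rightarrow> complex" where "V = (\<lambda>i. if i = 0 then 0 else if i = 1 then 1 else if i = 2 then -1 else \<i>)"
  have E: "M i j = complex_of_real (1/4) * W i * cnj (W j)" if "i < 4" "j < 4" for i j
    using that unfolding lt4 W_def M_def xstate_def perp_32
    by (elim disjE; simp add: pmat_def pauli1_def)
  have v: "valid M" unfolding valid_def by (rule psd_rank1[OF E]) auto
  have "Re (\<Sum>i<4. \<Sum>j<4. cnj (V i) * ptrans M i j * V j) < 0"
    by (simp add: sum4 ptrans_def E W_def V_def)
  then have "entangled M" unfolding entangled_def using psd_neg[of "ptrans M" V] by linarith
  with v show ?thesis unfolding M_def by blast
qed

lemma ent_33: "valid (xstate (3,3) (\<lambda>q. if q = (1,1) then 1 else if q = (2,2) then 1 else if q = (3,3) then -1 else 0)) \<and> entangled (xstate (3,3) (\<lambda>q. if q = (1,1) then 1 else if q = (2,2) then 1 else if q = (3,3) then -1 else 0))"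
  (is "valid ?M \<and> entangled ?M")
proof -
  define M where "M = ?M"
  define W :: "nat \<Rightarrow> complex" where "W = (\<lambda>i. if i = 0 then 0 else if i = 1 then 1 else if i = 2 then 1 else 0)"
  define V :: "nat \<Rightarrow> complex" where "V = (\<lambda>i. if i = 0 then 1 else if i = 1 then 0 else if i = 2 then 0 else -1)"
  have E: "M i j = complex_of_real (1/2) * W i * cnj (W j)" if "i < 4" "j < 4" for i j
    using that unfolding lt4 W_def M_def xstate_def perp_33
    by (elim disjE; simp add: pmat_def pauli1_def)
  have v: "valid M" unfolding valid_def by (rule psd_rank1[OF E]) auto
  have "Re (\<Sum>i<4. \<Sum>j<4. cnj (V i) * ptrans M i j * V j) < 0"
    by (simp add: sum4 ptrans_def E W_def V_def)
  then have "entangled M" unfolding entangled_def using psd_neg[of "ptrans M" V] by linarith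
  with v show ?thesis unfolding M_def by blast
qed

lemmas ent_ex = ent_11 ent_12 ent_13 ent_21 ent_22 ent_23 ent_31 ent_32 ent_33

lemma sep_01: assumes "psd4 (xstate (0,1) c)" shows "psd4 (ptrans (xstate (0,1) c))"
proof -
  define M where "M = xstate (0,1) c"
  define \<sigma> :: "nat \<Rightarrow> nat" where "\<sigma> = (\<lambda>i. i)"
  have s1: "\<sigma> i < 4" if "i < 4" for i using that unfolding \<sigma>_def by auto
  have s2: "\<sigma> (\<sigma> i) = i" if "i < 4" for i using that unfolding \<sigma>_def lt4 by auto

  have E: "ptrans M i j = M (\<sigma> i) (\<sigma> j)" if "i < 4" "j < 4" for i j
    using that unfolding lt4 \<sigma>_def M_def ptrans_def xstate_def perp_01
    by (elim disjE; simp add: pmat_def pauli1_def algebra_simps)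
  show ?thesis unfolding M_def[symmetric]
    by (rule psd_perm[where N="ptrans M" and M=M and \<sigma>=\<sigma>, OF E s1 s2]) (use assms M_def in auto)
qed

lemma sep_02: assumes "psd4 (xstate (0,2) c)" shows "psd4 (ptrans (xstate (0,2) c))"
proof -
  define M where "M = xstate (0,2) c"
  define \<sigma> :: "nat \<Rightarrow> nat" where "\<sigma> = (\<lambda>i. if i = 0 then 1 else if i = 1 then 0 else if i = 2 then 3 else 2)"
  have s1: "\<sigma> i < 4" if "i < 4" for i using that unfolding \<sigma>_def by auto
  have s2: "\<sigma> (\<sigma> i) = i" if "i < 4" for i using that unfolding \<sigma>_def lt4 by auto

  have E: "ptrans M i j = M (\<sigma> i) (\<sigma> j)" if "i < 4" "j < 4" for i j
    using that unfolding lt4 \<sigma>_def M_def ptrans_def xstate_def perp_02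
    by (elim disjE; simp add: pmat_def pauli1_def algebra_simps)
  show ?thesis unfolding M_def[symmetric]
    by (rule psd_perm[where N="ptrans M" and M=M and \<sigma>=\<sigma>, OF E s1 s2]) (use assms M_def in auto)
qed

lemma sep_03: assumes "psd4 (xstate (0,3) c)" shows "psd4 (ptrans (xstate (0,3) c))"
proof -
  define M where "M = xstate (0,3) c"
  define \<sigma> :: "nat \<Rightarrow> nat" where "\<sigma> = (\<lambda>i. i)"
  have s1: "\<sigma> i < 4" if "i < 4" for i using that unfolding \<sigma>_def by auto
  have s2: "\<sigma> (\<sigma> i) = i" if "i < 4" for i using that unfolding \<sigma>_def lt4 by auto

  have E: "ptrans M i j = M (\<sigma> i) (\<sigma> j)" if "i < 4" "j < 4" for i j
    using that unfolding lt4 \<sigma>_def M_def ptrans_def xstate_def perp_03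
    by (elim disjE; simp add: pmat_def pauli1_def algebra_simps)
  show ?thesis unfolding M_def[symmetric]
    by (rule psd_perm[where N="ptrans M" and M=M and \<sigma>=\<sigma>, OF E s1 s2]) (use assms M_def in auto)
qed

lemma sep_10: assumes "psd4 (xstate (1,0) c)" shows "psd4 (ptrans (xstate (1,0) c))"
proof -
  define M where "M = xstate (1,0) c"
  define \<sigma> :: "nat \<Rightarrow> nat" where "\<sigma> = (\<lambda>i. i)"
  have s1: "\<sigma> i < 4" if "i < 4" for i using that unfolding \<sigma>_def by auto
  have s2: "\<sigma> (\<sigma> i) = i" if "i < 4" for i using that unfolding \<sigma>_def lt4 by auto

  have E: "ptrans M i j = M (\<sigma> j) (\<sigma> i)" if "i < 4" "j < 4" for i j
    using that unfolding lt4 \<sigma>_def M_def ptrans_def xstate_def perp_10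
    by (elim disjE; simp add: pmat_def pauli1_def algebra_simps)
  have "psd4 (\<lambda>i j. M (\<sigma> i) (\<sigma> j))"
    by (rule psd_perm[OF _ s1 s2]) (use assms M_def in auto)
  then show ?thesis unfolding M_def[symmetric] by (rule psd_trans[rotated]) (simp add: E)
qed

lemma sep_20: assumes "psd4 (xstate (2,0) c)" shows "psd4 (ptrans (xstate (2,0) c))"
proof -
  define M where "M = xstate (2,0) c"
  define \<sigma> :: "nat \<Rightarrow> nat" where "\<sigma> = (\<lambda>i. if i = 0 then 2 else if i = 1 then 3 else if i = 2 then 0 else 1)"
  have s1: "\<sigma> i < 4" if "i < 4" for i using that unfolding \<sigma>_def by auto
  have s2: "\<sigma> (\<sigma> i) = i" if "i < 4" for i using that unfolding \<sigma>_def lt4 by auto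

  have E: "ptrans M i j = M (\<sigma> j) (\<sigma> i)" if "i < 4" "j < 4" for i j
    using that unfolding lt4 \<sigma>_def M_def ptrans_def xstate_def perp_20
    by (elim disjE; simp add: pmat_def pauli1_def algebra_simps)
  have "psd4 (\<lambda>i j. M (\<sigma> i) (\<sigma> j))"
    by (rule psd_perm[OF _ s1 s2]) (use assms M_def in auto)
  then show ?thesis unfolding M_def[symmetric] by (rule psd_trans[rotated]) (simp add: E)
qed

lemma sep_30: assumes "psd4 (xstate (3,0) c)" shows "psd4 (ptrans (xstate (3,0) c))"
proof -
  define M where "M = xstate (3,0) c"
  define \<sigma> :: "nat \<Rightarrow> nat" where "\<sigma> = (\<lambda>i. i)"
  have s1: "\<sigma> i < 4" if "i < 4" for i using that unfolding \<sigma>_def by auto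
  have s2: "\<sigma> (\<sigma> i) = i" if "i < 4" for i using that unfolding \<sigma>_def lt4 by auto

  have E: "ptrans M i j = M (\<sigma> j) (\<sigma> i)" if "i < 4" "j < 4" for i j
    using that unfolding lt4 \<sigma>_def M_def ptrans_def xstate_def perp_30
    by (elim disjE; simp add: pmat_def pauli1_def algebra_simps)
  have "psd4 (\<lambda>i j. M (\<sigma> i) (\<sigma> j))"
    by (rule psd_perm[OF _ s1 s2]) (use assms M_def in auto)
  then show ?thesis unfolding M_def[symmetric] by (rule psd_trans[rotated]) (simp add: E)
qed

lemmas sep_ex = sep_01 sep_02 sep_03 sep_10 sep_20 sep_30

lemma ent_Q0: "p \<in> Q0 \<Longrightarrow> \<exists>c. valid (xstate p c) \<and> entangled (xstate p c)"
  by (drule Q0_cases, elim disjE; hypsubst; rule exI, rule ent_ex)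
lemma sep_nQ0: "p \<in> points \<Longrightarrow> p \<notin> Q0 \<Longrightarrow> valid (xstate p c) \<Longrightarrow> separable (xstate p c)"
  unfolding valid_def separable_def
  by (drule pts_cases, assumption, elim disjE; hypsubst; erule sep_ex)

theorem proposition3:
  shows "(\<forall>p\<in>points. (\<exists>c. valid (xstate p c) \<and> entangled (xstate p c)) \<longleftrightarrow> tangential p)
       \<and> (\<forall>p\<in>points. (\<forall>c. valid (xstate p c) \<longrightarrow> separable (xstate p c)) \<longleftrightarrow> transversal p)
       \<and> card {p\<in>points. tangential p} = 9
       \<and> card {p\<in>points. transversal p} = 6"
proof -
  have A: "\<forall>p\<in>points. (\<exists>c. valid (xstate p c) \<and> entangled (xstate p c)) \<longleftrightarrow> tangential p"
  proof
    fix p assume p: "p \<in> points"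
    show "(\<exists>c. valid (xstate p c) \<and> entangled (xstate p c)) \<longleftrightarrow> tangential p"
    proof (cases "p \<in> Q0")
      case True
      then show ?thesis using ent_Q0 tang_Q0 by blast
    next
      case False
      then show ?thesis using sep_nQ0[OF p False] not_tang[OF p False]
        unfolding entangled_def separable_def by blast
    qed
  qed
  have B: "\<forall>p\<in>points. (\<forall>c. valid (xstate p c) \<longrightarrow> separable (xstate p c)) \<longleftrightarrow> transversal p"
  proof
    fix p assume p: "p \<in> points"
    show "(\<forall>c. valid (xstate p c) \<longrightarrow> separable (xstate p c)) \<longleftrightarrow> transversal p"
    proof (cases "p \<in> Q0")
      case True
      then show ?thesis using ent_Q0[OF True] not_trans[OF True]
        unfolding entangled_def separable_def by blast
    next
      case False
      then show ?thesis using sep_nQ0[OF p False] trans_nQ0[OF p False] by blast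
    qed
  qed
  have C: "{p\<in>points. tangential p} = Q0"
    using tang_Q0 not_tang Q0_points by blast
  have D: "{p\<in>points. transversal p} = points - Q0"
    using trans_nQ0 not_trans by blast
  have C': "card Q0 = 9" unfolding Q0_expl by simp
  have D': "card (points - Q0) = 6" unfolding points_expl Q0_expl by simp
  show ?thesis using A B C D C' D' by simp
qed

end
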